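(* Let $\mathcal{A}\in\mathbb{R}^{d_1\times\cdots\times d_k}$ be an arbitrary order-$k$ real tensor and let $\pi_1,\pi_2\in\mathcal{P}_{[k]}$ be any two partitions (not necessarily comparable). Then \[ \left[\frac{\dim(\mathcal{A})}{\dim_{\mathcal{A}}(\pi_1,\pi_2)}\right]^{-1/2}\|\mathrm{Unfold}_{\pi_1}(\mathcal{A})\|_\sigma\le \|\mathrm{Unfold}_{\pi_2}(\mathcal{A})\|_\sigma\le \left[\frac{\dim(\mathcal{A})}{\dim_{\mathcal{A}}(\pi_2,\pi_1)}\right]^{1/2}\|\mathrm{Unfold}_{\pi_1}(\mathcal{A})\|_\sigma . \]
   Context: $\dim(\mathcal{A})=\prod_{n=1}^k d_n$. For a real tensor $\mathcal{T}\in\mathbb{R}^{e_1\times\cdots\times e_m}$, $\|\mathcal{T}\|_\sigma=\sup\{\sum t_{i_1\dots i_m}x^{(1)}_{i_1}\cdots x^{(m)}_{i_m}:\ \mathbf{x}_n\in\mathbb{R}^{e_n},\ \|\mathbf{x}_n\|_2=1\}$ (spectral norm). $\mathcal{P}_{[k]}$ is the set of partitions of $[k]=\{1,\dots,k\}$. Unfolding: for $\pi=\{B_1,\dots,B_\ell\}\in\mathcal{P}_{[k]}$, $\mathrm{Unfold}_\pi(\mathcal{A})$ is the order-$\ell$ tensor of dimensions $(\prod_{j\in B_1}d_j,\dots,\prod_{j\in B_\ell}d_j)$ whose entry at $(m_1,\dots,m_\ell)$ is $a_{i_1\dots i_k}$, where $m_j$ corresponds to $(i_r)_{r\in B_j}$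 under a fixed bijection $\prod_{r\in B_j}[d_r]\to[\prod_{r\in B_j}d_r]$. For $\pi_1,\pi_2\in\mathcal{P}_{[k]}$ define $\dim_{\mathcal{A}}(\pi_1,\pi_2)=\prod_{B\in\pi_1}\max_{B'\in\pi_2}D_{\mathcal{A}}(B,B')$, where $D_{\mathcal{A}}(B,B')=\prod_{n\in B\cap B'}d_n$ if $B\cap B'\neq\emptyset$ and $D_{\mathcal{A}}(B,B')=0$ if $B\cap B'=\emptyset$. *)

theory Defs
  imports "HOL-Analysis.Analysis" "HOL-Library.Disjoint_Sets"
begin

text \<open>A real tensor of order m with dimensions e (positions 1..m) is
  a function T :: (nat \<Rightarrow> nat) \<Rightarrow> real; its entries are the values on the
  index tuples in tidx m e, where the index in position j ranges over {0..<e j}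
  (0-based instead of the paper's 1-based; irrelevant).\<close>

definition tidx :: "nat set \<Rightarrow> (nat \<Rightarrow> nat) \<Rightarrow> (nat \<Rightarrow> nat) set" where
  "tidx I e = PiE I (\<lambda>j. {..<e j})"

definition spec_norm :: "nat \<Rightarrow> (nat \<Rightarrow> nat) \<Rightarrow> ((nat \<Rightarrow> nat) \<Rightarrow> real) \<Rightarrow> real" where
  "spec_norm m e T = Sup {(\<Sum>i\<in>tidx {1..m} e. T i * (\<Prod>n\<in>{1..m}. x n (i n))) | x.
       \<forall>n\<in>{1..m}. sqrt (\<Sum>j<e n. (x n j)^2) = 1}"

definition blocks :: "nat set set \<Rightarrow> nat set list" where
  "blocks P = (SOME bs. set bs = P \<and> distinct bs)"

definition enc :: "(nat \<Rightarrow> nat) \<Rightarrow> nat set \<Rightarrow> (nat \<Rightarrow> nat) \<Rightarrow> nat" where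
  "enc d B = (SOME f. bij_betw f (tidx B d) {..<(\<Prod>r\<in>B. d r)})"

definition unfold_dims :: "(nat \<Rightarrow> nat) \<Rightarrow> nat set set \<Rightarrow> nat \<Rightarrow> nat" where
  "unfold_dims d P j = (\<Prod>r\<in>blocks P ! (j - 1). d r)"

definition unfold :: "nat \<Rightarrow> (nat \<Rightarrow> nat) \<Rightarrow> nat set set \<Rightarrow> ((nat \<Rightarrow> nat) \<Rightarrow> real)
     \<Rightarrow> (nat \<Rightarrow> nat) \<Rightarrow> real" where
  "unfold k d P A mm = A (THE i. i \<in> tidx {1..k} d \<and>
      (\<forall>j\<in>{1..length (blocks P)}. enc d (blocks P ! (j - 1)) (restrict i (blocks P ! (j - 1))) = mm j))"

definition unfold_norm :: "nat \<Rightarrow> (nat \<Rightarrow> nat) \<Rightarrow> nat set set \<Rightarrow> ((nat \<Rightarrow> nat) \<Rightarrow> real) \<Rightarrow> real" where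
  "unfold_norm k d P A = spec_norm (length (blocks P)) (unfold_dims d P) (unfold k d P A)"

definition DA :: "(nat \<Rightarrow> nat) \<Rightarrow> nat set \<Rightarrow> nat set \<Rightarrow> nat" where
  "DA d B B' = (if B \<inter> B' \<noteq> {} then (\<Prod>n\<in>B \<inter> B'. d n) else 0)"

definition dimA :: "(nat \<Rightarrow> nat) \<Rightarrow> nat set set \<Rightarrow> nat set set \<Rightarrow> nat" where
  "dimA d P1 P2 = (\<Prod>B\<in>P1. Max ((\<lambda>B'. DA d B B') ` P2))"

end

theory Submission
  imports Defs
begin


definition mrg :: "nat set \<Rightarrow> (nat \<Rightarrow> nat) \<Rightarrow> (nat \<Rightarrow> nat) \<Rightarrow> nat \<Rightarrow> nat" where
  "mrg B1 u1 u2 = (\<lambda>x. if x \<in> B1 then u1 x else u2 x)"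

lemma tidx_finite: "finite B \<Longrightarrow> finite (tidx B d)"
  unfolding tidx_def by (simp add: finite_PiE)

lemma restrict_tidx: "i \<in> tidx I d \<Longrightarrow> B \<subseteq> I \<Longrightarrow> restrict i B \<in> tidx B d"
  unfolding tidx_def by (auto simp: PiE_iff)

lemma mrg_tidx: "u1 \<in> tidx B1 d \<Longrightarrow> u2 \<in> tidx B2 d \<Longrightarrow> mrg B1 u1 u2 \<in> tidx (B1 \<union> B2) d"
  unfolding tidx_def mrg_def by (auto simp: PiE_iff extensional_def)

lemma restrict_mrg1: "u1 \<in> tidx B1 d \<Longrightarrow> restrict (mrg B1 u1 u2) B1 = u1"
  unfolding tidx_def mrg_def by (auto simp: PiE_iff extensional_def)

lemma restrict_mrg2: "u2 \<in> tidx B2 d \<Longrightarrow> B1 \<inter> B2 = {} \<Longrightarrow> restrict (mrg B1 u1 u2) B2 = u2"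
  unfolding tidx_def mrg_def by (rule ext) (auto simp: PiE_iff extensional_def)

lemma split_sum:
  assumes "finite B1" "finite B2" "B1 \<inter> B2 = {}"
  shows "(\<Sum>u\<in>tidx (B1 \<union> B2) d. (F u :: real)) = (\<Sum>u1\<in>tidx B1 d. \<Sum>u2\<in>tidx B2 d. F (mrg B1 u1 u2))"
proof -
  have bij: "bij_betw (\<lambda>(u1,u2). mrg B1 u1 u2) (tidx B1 d \<times> tidx B2 d) (tidx (B1 \<union> B2) d)"
  proof (rule bij_betw_byWitness[where f'="\<lambda>u. (restrict u B1, restrict u B2)"])
    show "\<forall>a\<in>tidx B1 d \<times> tidx B2 d. (\<lambda>u. (restrict u B1, restrict u B2)) ((\<lambda>(u1, u2). mrg B1 u1 u2) a) = a"
      using assms by (auto simp: restrict_mrg1 restrict_mrg2)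
    show "\<forall>a'\<in>tidx (B1 \<union> B2) d. (\<lambda>(u1, u2). mrg B1 u1 u2) ((\<lambda>u. (restrict u B1, restrict u B2)) a') = a'"
      unfolding tidx_def mrg_def by (auto simp: PiE_iff extensional_def)
    show "(\<lambda>(u1, u2). mrg B1 u1 u2) ` (tidx B1 d \<times> tidx B2 d) \<subseteq> tidx (B1 \<union> B2) d"
      by (auto simp: mrg_tidx)
    show "(\<lambda>u. (restrict u B1, restrict u B2)) ` tidx (B1 \<union> B2) d \<subseteq> tidx B1 d \<times> tidx B2 d"
      by (auto intro: restrict_tidx)
  qed
  have "(\<Sum>u\<in>tidx (B1 \<union> B2) d. F u) = (\<Sum>p\<in>tidx B1 d \<times> tidx B2 d. F ((\<lambda>(u1,u2). mrg B1 u1 u2) p))"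
    using sum.reindex_bij_betw[OF bij, of F] by simp
  also have "\<dots> = (\<Sum>u1\<in>tidx B1 d. \<Sum>u2\<in>tidx B2 d. F (mrg B1 u1 u2))"
    by (simp add: sum.cartesian_product split_beta)
  finally show ?thesis .
qed

lemma prod_split:
  fixes f :: "'j \<Rightarrow> (nat \<Rightarrow> nat) \<Rightarrow> real"
  assumes "finite J" "\<And>j. j \<in> J \<Longrightarrow> finite (b j)"
    "\<And>j j'. j \<in> J \<Longrightarrow> j' \<in> J \<Longrightarrow> j \<noteq> j' \<Longrightarrow> b j \<inter> b j' = {}"
  shows "(\<Sum>u\<in>tidx (\<Union>(b ` J)) d. \<Prod>j\<in>J. f j (restrict u (b j))) = (\<Prod>j\<in>J. \<Sum>v\<in>tidx (b j) d. f j v)"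
  using assms
proof (induction J rule: finite_induct)
  case empty
  then show ?case by (simp add: tidx_def)
next
  case (insert j J)
  let ?U = "\<Union>(b ` J)"
  have fin: "finite (b j)" "finite ?U" using insert by auto
  have dis: "b j \<inter> ?U = {}" using insert by fastforce
  have "(\<Sum>u\<in>tidx (\<Union>(b ` insert j J)) d. \<Prod>j\<in>insert j J. f j (restrict u (b j)))
      = (\<Sum>u\<in>tidx (b j \<union> ?U) d. f j (restrict u (b j)) * (\<Prod>j'\<in>J. f j' (restrict u (b j'))))"
    using insert by simp
  also have "\<dots> = (\<Sum>u1\<in>tidx (b j) d. \<Sum>u2\<in>tidx ?U d. f j (restrict (mrg (b j) u1 u2) (b j)) *
          (\<Prod>j'\<in>J. f j' (restrict (mrg (b j) u1 u2) (b j'))))"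
    by (rule split_sum[OF fin dis])
  also have "\<dots> = (\<Sum>u1\<in>tidx (b j) d. \<Sum>u2\<in>tidx ?U d. f j u1 * (\<Prod>j'\<in>J. f j' (restrict u2 (b j'))))"
  proof (intro sum.cong refl)
    fix u1 u2 assume u1: "u1 \<in> tidx (b j) d" and u2: "u2 \<in> tidx ?U d"
    have "\<And>j'. j' \<in> J \<Longrightarrow> restrict (mrg (b j) u1 u2) (b j') = restrict u2 (b j')"
    proof -
      fix j' assume j': "j' \<in> J"
      have "b j \<inter> b j' = {}" using insert j' by blast
      then show "restrict (mrg (b j) u1 u2) (b j') = restrict u2 (b j')"
        unfolding mrg_def restrict_def fun_eq_iff by auto
    qed
    then show "f j (restrict (mrg (b j) u1 u2) (b j)) * (\<Prod>j'\<in>J. f j' (restrict (mrg (b j) u1 u2) (b j')))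
        = f j u1 * (\<Prod>j'\<in>J. f j' (restrict u2 (b j')))"
      using restrict_mrg1[OF u1] by simp
  qed
  also have "\<dots> = (\<Sum>u1\<in>tidx (b j) d. f j u1) * (\<Sum>u2\<in>tidx ?U d. \<Prod>j'\<in>J. f j' (restrict u2 (b j')))"
    by (simp add: sum_distrib_left sum_distrib_right sum.swap[of _ "tidx (b j) d"])
  also have "\<dots> = (\<Prod>j\<in>insert j J. \<Sum>v\<in>tidx (b j) d. f j v)"
  proof -
    have IH: "(\<Sum>u2\<in>tidx ?U d. \<Prod>j'\<in>J. f j' (restrict u2 (b j'))) = (\<Prod>j\<in>J. \<Sum>v\<in>tidx (b j) d. f j v)"
      by (rule insert.IH) (use insert.prems in auto)
    show ?thesis unfolding IH using insert.hyps by simp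
  qed
  finally show ?case .
qed




definition val :: "nat set \<Rightarrow> (nat \<Rightarrow> nat) \<Rightarrow> nat set set \<Rightarrow> ((nat \<Rightarrow> nat) \<Rightarrow> real)
   \<Rightarrow> (nat set \<Rightarrow> (nat \<Rightarrow> nat) \<Rightarrow> real) \<Rightarrow> real" where
  "val I d P A y = (\<Sum>i\<in>tidx I d. A i * (\<Prod>B\<in>P. y B (restrict i B)))"

definition nrm :: "(nat \<Rightarrow> nat) \<Rightarrow> nat set \<Rightarrow> ((nat \<Rightarrow> nat) \<Rightarrow> real) \<Rightarrow> real" where
  "nrm d B f = (\<Sum>v\<in>tidx B d. (f v)^2)"

definition NN :: "nat set \<Rightarrow> (nat \<Rightarrow> nat) \<Rightarrow> nat set set \<Rightarrow> ((nat \<Rightarrow> nat) \<Rightarrow> real) \<Rightarrow> real" where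
  "NN I d P A = Sup {val I d P A y | y. \<forall>B\<in>P. nrm d B (y B) = 1}"

lemma sqrt_prod: "sqrt (prod f A) = (\<Prod>x\<in>A. sqrt (f x))"
proof (cases "finite A")
  case True then show ?thesis by (induction A rule: finite_induct) (auto simp: real_sqrt_mult)
qed simp

lemma nrm_nonneg: "nrm d B f \<ge> 0"
  unfolding nrm_def by (simp add: sum_nonneg)

lemma nrm_le: assumes "finite B" "v \<in> tidx B d" shows "(f v)^2 \<le> nrm d B f"
  unfolding nrm_def by (rule member_le_sum) (use assms tidx_finite in auto)

lemma val_bdd:
  assumes "finite I" "\<forall>B\<in>P. B \<subseteq> I"
  shows "bdd_above {val I d P A y | y. \<forall>B\<in>P. nrm d B (y B) = 1}"
proof (rule bdd_aboveI)
  fix z assume "z \<in> {val I d P A y | y. \<forall>B\<in>P. nrm d B (y B) = 1}"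
  then obtain y where y: "\<forall>B\<in>P. nrm d B (y B) = 1" and z: "z = val I d P A y" by auto
  have finP: "finite P" using assms by (meson Pow_iff finite_Pow_iff finite_subset subsetI)
  have "\<bar>\<Prod>B\<in>P. y B (restrict i B)\<bar> \<le> 1" if i: "i \<in> tidx I d" for i
  proof -
    have "\<bar>y B (restrict i B)\<bar> \<le> 1" if B: "B \<in> P" for B
    proof -
      have "(y B (restrict i B))^2 \<le> 1"
        using nrm_le[of B "restrict i B" d "y B"] y B assms restrict_tidx[OF i, of B]
        by (metis finite_subset)
      then show ?thesis using abs_square_le_1 by blast
    qed
    then show ?thesis unfolding abs_prod by (intro prod_le_1) auto
  qed
  then have "\<bar>A i * (\<Prod>B\<in>P. y B (restrict i B))\<bar> \<le> \<bar>A i\<bar>" if "i \<in> tidx I d" for i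
    using that by (simp add: abs_mult mult_left_le)
  then have "z \<le> (\<Sum>i\<in>tidx I d. \<bar>A i\<bar>)"
    unfolding z val_def by (meson abs_le_D1 order_trans sum_abs sum_mono)
  then show "z \<le> (\<Sum>i\<in>tidx I d. \<bar>A i\<bar>)" .
qed

lemma val_homog:
  assumes "finite I" "\<forall>B\<in>P. B \<subseteq> I"
  shows "val I d P A x \<le> NN I d P A * sqrt (\<Prod>B\<in>P. nrm d B (x B))"
proof (cases "\<exists>B\<in>P. nrm d B (x B) = 0")
  case True
  then obtain B0 where B0: "B0 \<in> P" "nrm d B0 (x B0) = 0" by auto
  have finB0: "finite B0" using assms B0 finite_subset by blast
  have z: "x B0 v = 0" if "v \<in> tidx B0 d" for v
    using nrm_le[OF finB0 that, of "x B0"] B0 by simp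
  have finP: "finite P" using assms by (meson Pow_iff finite_Pow_iff finite_subset subsetI)
  have "val I d P A x = 0"
    unfolding val_def
  proof (intro sum.neutral ballI)
    fix i assume i: "i \<in> tidx I d"
    have "x B0 (restrict i B0) = 0" using z restrict_tidx[OF i] assms B0 by auto
    then have "(\<Prod>B\<in>P. x B (restrict i B)) = 0" using finP B0 by (meson prod_zero)
    then show "A i * (\<Prod>B\<in>P. x B (restrict i B)) = 0" by simp
  qed
  moreover have "(\<Prod>B\<in>P. nrm d B (x B)) = 0" using finP B0 by (meson prod_zero)
  ultimately show ?thesis by simp
next
  case False
  have finP: "finite P" using assms by (meson Pow_iff finite_Pow_iff finite_subset subsetI)
  have pos: "nrm d B (x B) > 0" if "B \<in> P" for B using False that nrm_nonneg[of d B "x B"] by force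
  define y where "y B = (\<lambda>v. x B v / sqrt (nrm d B (x B)))" for B
  have ny: "\<forall>B\<in>P. nrm d B (y B) = 1"
  proof
    fix B assume B: "B \<in> P"
    have "nrm d B (y B) = (\<Sum>v\<in>tidx B d. (x B v)^2) / nrm d B (x B)"
      unfolding y_def nrm_def[of d B "\<lambda>v. _ v / _"]
      using pos[OF B] by (simp add: power_divide sum_divide_distrib)
    then show "nrm d B (y B) = 1" using pos[OF B] unfolding nrm_def by simp
  qed
  have "val I d P A x = (\<Prod>B\<in>P. sqrt (nrm d B (x B))) * val I d P A y"
    unfolding val_def sum_distrib_left
  proof (intro sum.cong refl)
    fix i assume i: "i \<in> tidx I d"
    have "(\<Prod>B\<in>P. x B (restrict i B)) = (\<Prod>B\<in>P. sqrt (nrm d B (x B)) * y B (restrict i B))"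
    proof (intro prod.cong refl)
      fix B assume "B \<in> P"
      then have "sqrt (nrm d B (x B)) \<noteq> 0" using pos[of B] by simp
      then show "x B (restrict i B) = sqrt (nrm d B (x B)) * y B (restrict i B)"
        unfolding y_def by simp
    qed
    then show "A i * (\<Prod>B\<in>P. x B (restrict i B)) =
        (\<Prod>B\<in>P. sqrt (nrm d B (x B))) * (A i * (\<Prod>B\<in>P. y B (restrict i B)))"
      by (simp add: prod.distrib)
  qed
  also have "\<dots> \<le> (\<Prod>B\<in>P. sqrt (nrm d B (x B))) * NN I d P A"
  proof (rule mult_left_mono)
    show "val I d P A y \<le> NN I d P A"
      unfolding NN_def by (rule cSup_upper) (use ny val_bdd[OF assms] in auto)
    show "0 \<le> (\<Prod>B\<in>P. sqrt (nrm d B (x B)))" by (intro prod_nonneg) (simp add: nrm_nonneg)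
  qed
  finally show ?thesis by (simp add: sqrt_prod mult.commute)
qed

lemma NN_nonneg:
  assumes "finite I" "\<forall>B\<in>P. B \<subseteq> I" "P \<noteq> {}" "\<forall>n\<in>I. d n > 0"
  shows "NN I d P A \<ge> 0"
proof -
  have finP: "finite P" using assms by (meson Pow_iff finite_Pow_iff finite_subset subsetI)
  define y where "y B = (\<lambda>v::nat\<Rightarrow>nat. if v = restrict (\<lambda>_. 0) B then (1::real) else 0)" for B :: "nat set"
  have v0: "restrict (\<lambda>_. 0) B \<in> tidx B d" if "B \<in> P" for B
  proof -
    have "\<forall>n\<in>B. d n > 0" using assms that by blast
    then show ?thesis unfolding tidx_def by auto
  qed
  have ny: "\<forall>B\<in>P. nrm d B (y B) = 1"
  proof
    fix B assume "B \<in> P"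
    have "finite B" using assms \<open>B \<in> P\<close> finite_subset by blast
    have "(\<Sum>v\<in>tidx B d. (y B v)^2) = (\<Sum>v\<in>tidx B d. if v = restrict (\<lambda>_. 0) B then 1 else 0)"
      unfolding y_def by (intro sum.cong) auto
    also have "\<dots> = 1" using v0[OF \<open>B \<in> P\<close>] tidx_finite[OF \<open>finite B\<close>, of d] by (simp add: sum.delta')
    finally show "nrm d B (y B) = 1" unfolding nrm_def .
  qed
  obtain B0 where B0: "B0 \<in> P" using assms by auto
  define y' where "y' = y(B0 := (\<lambda>v. - y B0 v))"
  have ny': "\<forall>B\<in>P. nrm d B (y' B) = 1"
    using ny unfolding y'_def nrm_def by auto
  have "val I d P A y' = - val I d P A y"
    unfolding val_def sum_negf[symmetric]
  proof (intro sum.cong refl)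
    fix i
    have "(\<Prod>B\<in>P. y' B (restrict i B)) = y' B0 (restrict i B0) * (\<Prod>B\<in>P-{B0}. y' B (restrict i B))"
      using finP B0 by (simp add: prod.remove)
    also have "\<dots> = - (y B0 (restrict i B0) * (\<Prod>B\<in>P-{B0}. y B (restrict i B)))"
      unfolding y'_def by simp
    also have "\<dots> = - (\<Prod>B\<in>P. y B (restrict i B))"
      using finP B0 by (simp add: prod.remove)
    finally show "A i * (\<Prod>B\<in>P. y' B (restrict i B)) = - (A i * (\<Prod>B\<in>P. y B (restrict i B)))" by simp
  qed
  moreover have "val I d P A y \<le> NN I d P A" "val I d P A y' \<le> NN I d P A"
    unfolding NN_def using ny ny' val_bdd[OF assms(1,2)] by (auto intro!: cSup_upper)
  ultimately show ?thesis by linarith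
qed




lemma part_sub: "partition_on I P \<Longrightarrow> B \<in> P \<Longrightarrow> B \<subseteq> I"
  using partition_onD1 by blast
lemma part_ne: "partition_on I P \<Longrightarrow> B \<in> P \<Longrightarrow> B \<noteq> {}"
  using partition_onD3 by blast
lemma part_dis: "partition_on I P \<Longrightarrow> B \<in> P \<Longrightarrow> B' \<in> P \<Longrightarrow> B \<noteq> B' \<Longrightarrow> B \<inter> B' = {}"
  using partition_onD2 disjointD by blast
lemma part_cover: "partition_on I P \<Longrightarrow> n \<in> I \<Longrightarrow> \<exists>B\<in>P. n \<in> B"
  using partition_onD1 by blast
lemma part_fin: "finite I \<Longrightarrow> partition_on I P \<Longrightarrow> finite P"
  using partition_onD1 finite_UnionD by blast

definition Fsel :: "(nat \<Rightarrow> nat) \<Rightarrow> nat set set \<Rightarrow> nat set \<Rightarrow> nat set" where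
  "Fsel d P1 B = (SOME B'. B' \<in> P1 \<and> DA d B B' = Max (DA d B ` P1))"

lemma Fsel:
  assumes fin: "finite I" and dpos: "\<forall>n\<in>I. 0 < d n"
    and p1: "partition_on I P1" and B: "B \<subseteq> I" "B \<noteq> {}"
  shows "Fsel d P1 B \<in> P1" "DA d B (Fsel d P1 B) = Max (DA d B ` P1)"
    "B \<inter> Fsel d P1 B \<noteq> {}" "(\<Prod>n\<in>B \<inter> Fsel d P1 B. d n) = Max (DA d B ` P1)"
    "Max (DA d B ` P1) > 0"
proof -
  have finP: "finite P1" using part_fin[OF fin p1] .
  obtain n where n: "n \<in> B" using B by auto
  then obtain B'' where B'': "B'' \<in> P1" "n \<in> B''" using part_cover[OF p1] B by blast
  have finB: "finite B" using B fin finite_subset by blast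
  have "\<forall>m\<in>B. d m > 0" using dpos B by blast
  then have "DA d B B'' > 0" unfolding DA_def using B'' n finB
    by (auto intro!: prod_pos)
  moreover have "DA d B B'' \<le> Max (DA d B ` P1)" using finP B'' by (intro Max_ge) auto
  ultimately show M: "Max (DA d B ` P1) > 0" by linarith
  have "Max (DA d B ` P1) \<in> DA d B ` P1" using finP B'' by (intro Max_in) auto
  then have ex: "\<exists>B'. B' \<in> P1 \<and> DA d B B' = Max (DA d B ` P1)" by auto
  show F1: "Fsel d P1 B \<in> P1" and F2: "DA d B (Fsel d P1 B) = Max (DA d B ` P1)"
    unfolding Fsel_def using someI_ex[OF ex] by auto
  show F3: "B \<inter> Fsel d P1 B \<noteq> {}" using F2 M unfolding DA_def by (auto split: if_splits)
  show "(\<Prod>n\<in>B \<inter> Fsel d P1 B. d n) = Max (DA d B ` P1)"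
    using F2 F3 unfolding DA_def by simp
qed

lemma dim_rel:
  assumes fin: "finite I" and dpos: "\<forall>n\<in>I. 0 < d n"
    and p1: "partition_on I P1" and p2: "partition_on I P2"
  shows "real (\<Prod>n\<in>I. d n) / real (dimA d P2 P1) = (\<Prod>B\<in>P2. \<Prod>n\<in>B - Fsel d P1 B. real (d n))"
    "dimA d P2 P1 > 0"
proof -
  have finP2: "finite P2" using part_fin[OF fin p2] .
  have sub: "B \<subseteq> I" "B \<noteq> {}" "finite B" if "B \<in> P2" for B
    using part_sub[OF p2 that] part_ne[OF p2 that] fin finite_subset by auto
  have dA: "dimA d P2 P1 = (\<Prod>B\<in>P2. \<Prod>n\<in>B \<inter> Fsel d P1 B. d n)"
    unfolding dimA_def using Fsel(4)[OF fin dpos p1 sub(1,2)] by (intro prod.cong) auto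
  show pos: "dimA d P2 P1 > 0" unfolding dimA_def using Fsel(5)[OF fin dpos p1 sub(1,2)]
    by (intro prod_pos) auto
  have "(\<Prod>n\<in>I. d n) = (\<Prod>B\<in>P2. \<Prod>n\<in>B. d n)"
    using prod.Union_disjoint[of P2 d] partition_onD1[OF p2] sub(3) part_dis[OF p2] by auto
  also have "\<dots> = (\<Prod>B\<in>P2. (\<Prod>n\<in>B \<inter> Fsel d P1 B. d n) * (\<Prod>n\<in>B - Fsel d P1 B. d n))"
  proof (intro prod.cong refl)
    fix B assume "B \<in> P2"
    have eq: "(B \<inter> Fsel d P1 B) \<union> (B - Fsel d P1 B) = B" by blast
    have "(\<Prod>n\<in>(B \<inter> Fsel d P1 B) \<union> (B - Fsel d P1 B). d n) = (\<Prod>n\<in>B \<inter> Fsel d P1 B. d n) * (\<Prod>n\<in>B - Fsel d P1 B. d n)"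
      by (rule prod.union_disjoint) (use sub(3)[OF \<open>B \<in> P2\<close>] in auto)
    then show "(\<Prod>n\<in>B. d n) = (\<Prod>n\<in>B \<inter> Fsel d P1 B. d n) * (\<Prod>n\<in>B - Fsel d P1 B. d n)"
      unfolding eq .
  qed
  also have "\<dots> = dimA d P2 P1 * (\<Prod>B\<in>P2. \<Prod>n\<in>B - Fsel d P1 B. d n)"
    unfolding dA by (simp add: prod.distrib)
  finally have eqn: "(\<Prod>n\<in>I. d n) = dimA d P2 P1 * (\<Prod>B\<in>P2. \<Prod>n\<in>B - Fsel d P1 B. d n)" .
  have "real (\<Prod>n\<in>I. d n) = real (dimA d P2 P1 * (\<Prod>B\<in>P2. \<Prod>n\<in>B - Fsel d P1 B. d n))"
    using eqn by (rule arg_cong)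
  also have "\<dots> = real (dimA d P2 P1) * (\<Prod>B\<in>P2. \<Prod>n\<in>B - Fsel d P1 B. real (d n))"
    by (simp only: of_nat_mult of_nat_prod)
  finally show "real (\<Prod>n\<in>I. d n) / real (dimA d P2 P1) = (\<Prod>B\<in>P2. \<Prod>n\<in>B - Fsel d P1 B. real (d n))"
    using pos by simp
qed




lemma adm_ex:
  assumes "finite I" "\<forall>B\<in>P. B \<subseteq> I" "\<forall>n\<in>I. d n > 0"
  shows "\<exists>y. \<forall>B\<in>P. nrm d B (y B) = 1"
proof -
  define y where "y B = (\<lambda>v::nat\<Rightarrow>nat. if v = restrict (\<lambda>_. 0) B then (1::real) else 0)" for B :: "nat set"
  have v0: "restrict (\<lambda>_. 0) B \<in> tidx B d" if "B \<in> P" for B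
  proof -
    have "\<forall>n\<in>B. d n > 0" using assms that by blast
    then show ?thesis unfolding tidx_def by auto
  qed
  have "\<forall>B\<in>P. nrm d B (y B) = 1"
  proof
    fix B assume "B \<in> P"
    have "finite B" using assms \<open>B \<in> P\<close> finite_subset by blast
    have "(\<Sum>v\<in>tidx B d. (y B v)^2) = (\<Sum>v\<in>tidx B d. if v = restrict (\<lambda>_. 0) B then 1 else 0)"
      unfolding y_def by (intro sum.cong) auto
    also have "\<dots> = 1" using v0[OF \<open>B \<in> P\<close>] tidx_finite[OF \<open>finite B\<close>, of d] by (simp add: sum.delta')
    finally show "nrm d B (y B) = 1" unfolding nrm_def .
  qed
  then show ?thesis by blast
qed

lemma main_ineq:
  assumes fin: "finite I" and ne: "I \<noteq> {}" and dpos: "\<forall>n\<in>I. 0 < d n"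
    and p1: "partition_on I P1" and p2: "partition_on I P2"
  shows "NN I d P2 A \<le> sqrt (real (\<Prod>n\<in>I. d n) / real (dimA d P2 P1)) * NN I d P1 A"
proof -
  define F where "F = Fsel d P1"
  define C where "C B = B \<inter> F B" for B
  define R where "R B = B - F B" for B
  define c where "c = sqrt (\<Prod>B\<in>P2. \<Prod>n\<in>R B. real (d n))"
  have c_eq: "c = sqrt (real (\<Prod>n\<in>I. d n) / real (dimA d P2 P1))"
    unfolding c_def R_def F_def dim_rel(1)[OF fin dpos p1 p2] ..
  have finP1: "finite P1" and finP2: "finite P2" using part_fin fin p1 p2 by auto
  have sub1: "B \<subseteq> I" "finite B" if "B \<in> P1" for B
    using part_sub[OF p1 that] fin finite_subset by auto
  have sub2: "B \<subseteq> I" "B \<noteq> {}" "finite B" if "B \<in> P2" for B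
    using part_sub[OF p2 that] part_ne[OF p2 that] fin finite_subset by auto
  have FP1: "F B \<in> P1" if "B \<in> P2" for B
    unfolding F_def using Fsel(1)[OF fin dpos p1 sub2(1,2)[OF that]] .
  have finCR: "finite (C B)" "finite (R B)" if "B \<in> P2" for B
    unfolding C_def R_def using sub2(3)[OF that] by auto
  have NN1: "NN I d P1 A \<ge> 0"
  proof (rule NN_nonneg[OF fin _ _ dpos])
    show "\<forall>B\<in>P1. B \<subseteq> I" using sub1 by blast
    show "P1 \<noteq> {}" using partition_onD1[OF p1] ne by auto
  qed
  have NNle: "val I d P2 A y \<le> c * NN I d P1 A" if y: "\<forall>B\<in>P2. nrm d B (y B) = 1" for y
  proof -
    define g where "g B t i = (if restrict i (R B) = t then y B (restrict i B) else 0)" for B t i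
    define W where "W T = (\<Sum>i\<in>tidx I d. A i * (\<Prod>B\<in>P2. g B (T B) i))" for T
    define PT where "PT = PiE P2 (\<lambda>B. tidx (R B) d)"
    define m where "m B t = (\<Sum>w\<in>tidx (C B) d. (y B (mrg (C B) w t))^2)" for B t
    have finPT: "finite PT" unfolding PT_def using finP2 finCR tidx_finite by (auto intro!: finite_PiE)
    have step1: "val I d P2 A y = (\<Sum>T\<in>PT. W T)"
    proof -
      have "(\<Prod>B\<in>P2. y B (restrict i B)) = (\<Sum>T\<in>PT. \<Prod>B\<in>P2. g B (T B) i)" if i: "i \<in> tidx I d" for i
      proof -
        have "(\<Prod>B\<in>P2. y B (restrict i B)) = (\<Prod>B\<in>P2. \<Sum>t\<in>tidx (R B) d. g B t i)"
        proof (intro prod.cong refl)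
          fix B assume B: "B \<in> P2"
          have "restrict i (R B) \<in> tidx (R B) d"
            by (rule restrict_tidx[OF i]) (use sub2(1)[OF B] in \<open>auto simp: R_def\<close>)
          then show "y B (restrict i B) = (\<Sum>t\<in>tidx (R B) d. g B t i)"
            unfolding g_def using tidx_finite[OF finCR(2)[OF B]] by (simp add: sum.delta)
        qed
        also have "\<dots> = (\<Sum>T\<in>PT. \<Prod>B\<in>P2. g B (T B) i)"
          unfolding PT_def by (rule prod_sum_PiE) (use finP2 finCR tidx_finite in auto)
        finally show ?thesis .
      qed
      then have "val I d P2 A y = (\<Sum>i\<in>tidx I d. \<Sum>T\<in>PT. A i * (\<Prod>B\<in>P2. g B (T B) i))"
        unfolding val_def by (simp add: sum_distrib_left)
      also have "\<dots> = (\<Sum>T\<in>PT. W T)" unfolding W_def by (rule sum.swap)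
      finally show ?thesis .
    qed
    have step2: "W T \<le> NN I d P1 A * sqrt (\<Prod>B\<in>P2. m B (T B))" if T: "T \<in> PT" for T
    proof -
      define phi where "phi B B' w = (if F B = B' then y B (mrg (C B) w (T B))
          else (if w = restrict (T B) (B \<inter> B') then 1 else 0))" for B B' w
      define x where "x B' u = (\<Prod>B\<in>P2. phi B B' (restrict u (B \<inter> B')))" for B' u
      have TB: "T B \<in> tidx (R B) d" if "B \<in> P2" for B using T that unfolding PT_def by auto
      have BB': "B \<inter> B' \<subseteq> R B" if "B \<in> P2" "B' \<in> P1" "B' \<noteq> F B" for B B'
        using part_dis[OF p1 that(2) FP1[OF that(1)] that(3)] unfolding R_def by blast
      have key: "(\<Prod>B'\<in>P1. phi B B' (restrict i (B \<inter> B'))) = g B (T B) i"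
        if B: "B \<in> P2" and i: "i \<in> tidx I d" for B i
      proof -
        have "(\<Prod>B'\<in>P1. phi B B' (restrict i (B \<inter> B'))) =
            phi B (F B) (restrict i (B \<inter> F B)) * (\<Prod>B'\<in>P1-{F B}. phi B B' (restrict i (B \<inter> B')))"
          using finP1 FP1[OF B] by (simp add: prod.remove)
        also have "\<dots> = y B (mrg (C B) (restrict i (C B)) (T B)) *
            (\<Prod>B'\<in>P1-{F B}. (if restrict i (B \<inter> B') = restrict (T B) (B \<inter> B') then 1 else 0))"
          unfolding phi_def C_def by (intro arg_cong2[where f="(*)"] prod.cong) auto
        also have "\<dots> = g B (T B) i"
        proof (cases "restrict i (R B) = T B")
          case True
          have "restrict i (B \<inter> B') = restrict (T B) (B \<inter> B')" if "B' \<in> P1-{F B}" for B'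
            using BB'[OF B, of B'] that unfolding True[symmetric] restrict_def fun_eq_iff by auto
          then have 1: "(\<Prod>B'\<in>P1-{F B}. (if restrict i (B \<inter> B') = restrict (T B) (B \<inter> B') then 1 else 0)) = (1::real)"
            by (intro prod.neutral) auto
          have "mrg (C B) (restrict i (C B)) (T B) = restrict i B"
            unfolding True[symmetric] mrg_def C_def R_def restrict_def fun_eq_iff by auto
          then show ?thesis unfolding 1 g_def using True by simp
        next
          case False
          have ri: "restrict i (R B) \<in> tidx (R B) d"
            by (rule restrict_tidx[OF i]) (use sub2(1)[OF B] in \<open>auto simp: R_def\<close>)
          have "\<exists>z\<in>R B. restrict i (R B) z \<noteq> T B z"
          proof (rule ccontr)
            assume "\<not> (\<exists>z\<in>R B. restrict i (R B) z \<noteq> T B z)"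
            then have "restrict i (R B) = T B"
              using PiE_ext[of "restrict i (R B)" "R B" "\<lambda>j. {..<d j}" "T B"] ri TB[OF B]
              unfolding tidx_def by blast
            with False show False by simp
          qed
          then obtain z where z: "z \<in> R B" "i z \<noteq> T B z" by auto
          have "z \<in> I" using z sub2(1)[OF B] unfolding R_def by auto
          then obtain B' where B': "B' \<in> P1" "z \<in> B'" using part_cover[OF p1] by blast
          have "B' \<noteq> F B" using z B' unfolding R_def by auto
          have "restrict i (B \<inter> B') \<noteq> restrict (T B) (B \<inter> B')"
            using z B' unfolding R_def restrict_def fun_eq_iff by auto
          then have "(\<Prod>B'\<in>P1-{F B}. (if restrict i (B \<inter> B') = restrict (T B) (B \<inter> B') then 1 else 0)) = (0::real)"
            using finP1 B' \<open>B' \<noteq> F B\<close> by (intro prod_zero) auto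
          then show ?thesis unfolding g_def using False by simp
        qed
        finally show ?thesis .
      qed
      have WT: "W T = val I d P1 A x"
        unfolding W_def val_def
      proof (intro sum.cong refl arg_cong2[where f="(*)"])
        fix i assume i: "i \<in> tidx I d"
        have "(\<Prod>B'\<in>P1. x B' (restrict i B')) = (\<Prod>B'\<in>P1. \<Prod>B\<in>P2. phi B B' (restrict i (B \<inter> B')))"
          unfolding x_def by (intro prod.cong refl arg_cong[where f="phi _ _"]) (auto simp: restrict_def fun_eq_iff)
        also have "\<dots> = (\<Prod>B\<in>P2. \<Prod>B'\<in>P1. phi B B' (restrict i (B \<inter> B')))"
          by (rule prod.swap)
        also have "\<dots> = (\<Prod>B\<in>P2. g B (T B) i)"
          using key i by (intro prod.cong refl) auto
        finally show "(\<Prod>B\<in>P2. g B (T B) i) = (\<Prod>B'\<in>P1. x B' (restrict i B'))" by simp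
      qed
      have nx: "nrm d B' (x B') = (\<Prod>B\<in>P2. if F B = B' then m B (T B) else 1)" if B': "B' \<in> P1" for B'
      proof -
        have U: "\<Union>((\<lambda>B. B \<inter> B') ` P2) = B'"
          using partition_onD1[OF p2] sub1(1)[OF B'] by blast
        have "nrm d B' (x B') = (\<Sum>u\<in>tidx (\<Union>((\<lambda>B. B \<inter> B') ` P2)) d. \<Prod>B\<in>P2. (phi B B' (restrict u (B \<inter> B')))^2)"
          unfolding nrm_def x_def U by (simp add: prod_power_distrib)
        also have "\<dots> = (\<Prod>B\<in>P2. \<Sum>w\<in>tidx (B \<inter> B') d. (phi B B' w)^2)"
          by (rule prod_split) (use finP2 sub2(3) part_dis[OF p2] in auto)
        also have "\<dots> = (\<Prod>B\<in>P2. if F B = B' then m B (T B) else 1)"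
        proof (intro prod.cong refl)
          fix B assume B: "B \<in> P2"
          show "(\<Sum>w\<in>tidx (B \<inter> B') d. (phi B B' w)^2) = (if F B = B' then m B (T B) else 1)"
          proof (cases "F B = B'")
            case True
            then show ?thesis unfolding phi_def m_def C_def by simp
          next
            case False
            have r: "restrict (T B) (B \<inter> B') \<in> tidx (B \<inter> B') d"
              using restrict_tidx[OF TB[OF B] BB'[OF B B' False[symmetric]]] .
            have "(\<Sum>w\<in>tidx (B \<inter> B') d. (phi B B' w)^2) =
                (\<Sum>w\<in>tidx (B \<inter> B') d. if w = restrict (T B) (B \<inter> B') then 1 else 0)"
              unfolding phi_def using False by (intro sum.cong) auto
            also have "\<dots> = 1" using r tidx_finite[of "B \<inter> B'" d] sub2(3)[OF B] by simp
            finally show ?thesis using False by simp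
          qed
        qed
        finally show ?thesis .
      qed
      have "(\<Prod>B'\<in>P1. nrm d B' (x B')) = (\<Prod>B'\<in>P1. \<Prod>B\<in>P2. if F B = B' then m B (T B) else 1)"
        using nx by (intro prod.cong) auto
      also have "\<dots> = (\<Prod>B\<in>P2. \<Prod>B'\<in>P1. if F B = B' then m B (T B) else 1)" by (rule prod.swap)
      also have "\<dots> = (\<Prod>B\<in>P2. m B (T B))"
        using finP1 FP1 by (intro prod.cong refl) auto
      finally have "(\<Prod>B'\<in>P1. nrm d B' (x B')) = (\<Prod>B\<in>P2. m B (T B))" .
      then show ?thesis unfolding WT using val_homog[OF fin, of P1 d A x] sub1 by auto
    qed
    have msum: "(\<Sum>t\<in>tidx (R B) d. m B t) = 1" if B: "B \<in> P2" for B
    proof -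
      have "(\<Sum>t\<in>tidx (R B) d. m B t) = (\<Sum>w\<in>tidx (C B) d. \<Sum>t\<in>tidx (R B) d. (y B (mrg (C B) w t))^2)"
        unfolding m_def by (rule sum.swap)
      also have "\<dots> = (\<Sum>v\<in>tidx (C B \<union> R B) d. (y B v)^2)"
        by (rule split_sum[symmetric]) (use finCR[OF B] in \<open>auto simp: C_def R_def\<close>)
      also have "C B \<union> R B = B" unfolding C_def R_def by blast
      finally show ?thesis using y B unfolding nrm_def by simp
    qed
    have mnn: "m B t \<ge> 0" for B t unfolding m_def by (simp add: sum_nonneg)
    have sqle: "(\<Sum>t\<in>tidx (R B) d. sqrt (m B t)) \<le> sqrt (\<Prod>n\<in>R B. real (d n))" if B: "B \<in> P2" for B
    proof (rule real_le_rsqrt)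
      have "(\<Sum>t\<in>tidx (R B) d. sqrt (m B t))^2 \<le> (\<Sum>t\<in>tidx (R B) d. (sqrt (m B t))^2) * card (tidx (R B) d)"
        by (rule sum_squared_le_sum_of_squares)
      also have "(\<Sum>t\<in>tidx (R B) d. (sqrt (m B t))^2) = 1" using msum[OF B] mnn by simp
      also have "card (tidx (R B) d) = (\<Prod>n\<in>R B. d n)"
        unfolding tidx_def using finCR(2)[OF B] by (simp add: card_PiE)
      finally show "(\<Sum>t\<in>tidx (R B) d. sqrt (m B t))^2 \<le> (\<Prod>n\<in>R B. real (d n))"
        by (simp add: of_nat_prod)
    qed
    have step3: "(\<Sum>T\<in>PT. sqrt (\<Prod>B\<in>P2. m B (T B))) \<le> c"
    proof -
      have "(\<Sum>T\<in>PT. sqrt (\<Prod>B\<in>P2. m B (T B))) = (\<Sum>T\<in>PT. \<Prod>B\<in>P2. sqrt (m B (T B)))"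
        by (simp add: sqrt_prod)
      also have "\<dots> = (\<Prod>B\<in>P2. \<Sum>t\<in>tidx (R B) d. sqrt (m B t))"
        unfolding PT_def by (rule prod_sum_PiE[symmetric]) (use finP2 finCR tidx_finite in auto)
      also have "\<dots> \<le> (\<Prod>B\<in>P2. sqrt (\<Prod>n\<in>R B. real (d n)))"
        by (rule prod_mono) (use sqle mnn in \<open>auto intro!: sum_nonneg\<close>)
      also have "\<dots> = c" unfolding c_def by (simp add: sqrt_prod)
      finally show ?thesis .
    qed
    have "val I d P2 A y = (\<Sum>T\<in>PT. W T)" by (rule step1)
    also have "\<dots> \<le> (\<Sum>T\<in>PT. NN I d P1 A * sqrt (\<Prod>B\<in>P2. m B (T B)))"
      by (rule sum_mono) (rule step2)
    also have "\<dots> = NN I d P1 A * (\<Sum>T\<in>PT. sqrt (\<Prod>B\<in>P2. m B (T B)))"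
      by (simp add: sum_distrib_left)
    also have "\<dots> \<le> NN I d P1 A * c"
      by (rule mult_left_mono[OF step3 NN1])
    finally show ?thesis by (simp add: mult.commute)
  qed
  have "NN I d P2 A \<le> c * NN I d P1 A"
    unfolding NN_def
  proof (rule cSup_least)
    show "{val I d P2 A y |y. \<forall>B\<in>P2. nrm d B (y B) = 1} \<noteq> {}"
      using adm_ex[OF fin _ dpos, of P2] sub2 by auto
    show "\<And>z. z \<in> {val I d P2 A y |y. \<forall>B\<in>P2. nrm d B (y B) = 1} \<Longrightarrow> z \<le> c * Sup {val I d P1 A y |y. \<forall>B\<in>P1. nrm d B (y B) = 1}"
      using NNle unfolding NN_def by auto
  qed
  then show ?thesis unfolding c_eq .
qed




lemma unfold_eq:
  assumes dpos: "\<forall>n\<in>{1..k}. d n > 0" and p: "partition_on {1..k} P"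
  shows "unfold_norm k d P A = NN {1..k} d P A"
proof -
  define I where "I = {1..k::nat}"
  have fin: "finite I" unfolding I_def by simp
  have finP: "finite P" using part_fin[OF fin] p unfolding I_def by simp
  define bs where "bs = blocks P"
  have bs: "set bs = P" "distinct bs"
    using someI_ex[OF finite_distinct_list[OF finP]] unfolding bs_def blocks_def by auto
  define l where "l = length bs"
  define Bn where "Bn n = bs ! (n - 1)" for n
  have Bn_in: "Bn n \<in> P" if "n \<in> {1..l}" for n
    using that bs(1) unfolding Bn_def l_def by auto
  have inj: "inj_on Bn {1..l}"
    unfolding inj_on_def Bn_def l_def using bs(2) nth_eq_iff_index_eq by fastforce
  have img: "Bn ` {1..l} = P"
  proof
    show "Bn ` {1..l} \<subseteq> P" using Bn_in by auto
    show "P \<subseteq> Bn ` {1..l}"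
    proof
      fix B assume "B \<in> P"
      then obtain i where "i < l" "bs ! i = B" using bs(1) in_set_conv_nth unfolding l_def by metis
      then have "Bn (Suc i) = B" "Suc i \<in> {1..l}" unfolding Bn_def by auto
      then show "B \<in> Bn ` {1..l}" by blast
    qed
  qed
  have subP: "B \<subseteq> I" "finite B" if "B \<in> P" for B
    using part_sub[OF p that] fin finite_subset unfolding I_def by auto
  have encB: "bij_betw (enc d B) (tidx B d) {..<(\<Prod>r\<in>B. d r)}" if B: "B \<in> P" for B
  proof -
    have "card (tidx B d) = card {..<(\<Prod>r\<in>B. d r)}"
      unfolding tidx_def using subP(2)[OF B] by (simp add: card_PiE)
    then have "\<exists>f. bij_betw f (tidx B d) {..<(\<Prod>r\<in>B. d r)}"
      by (intro finite_same_card_bij) (use tidx_finite subP(2)[OF B] in auto)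
    then show ?thesis unfolding enc_def by (rule someI_ex)
  qed
  define e where "e = unfold_dims d P"
  have e: "e n = (\<Prod>r\<in>Bn n. d r)" for n unfolding e_def unfold_dims_def Bn_def bs_def ..
  define mp where "mp i = restrict (\<lambda>n. enc d (Bn n) (restrict i (Bn n))) {1..l}" for i
  have mp_in: "mp i \<in> tidx {1..l} e" if i: "i \<in> tidx I d" for i
  proof -
    have "enc d (Bn n) (restrict i (Bn n)) < e n" if n: "n \<in> {1..l}" for n
      using bij_betwE[OF encB[OF Bn_in[OF n]]] restrict_tidx[OF i subP(1)[OF Bn_in[OF n]]] e[of n] by auto
    then show ?thesis unfolding mp_def tidx_def by auto
  qed
  have mp_inj: "inj_on mp (tidx I d)"
  proof
    fix i i' assume i: "i \<in> tidx I d" and i': "i' \<in> tidx I d" and eq: "mp i = mp i'"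
    have r: "restrict i B = restrict i' B" if B: "B \<in> P" for B
    proof -
      obtain n where n: "n \<in> {1..l}" "Bn n = B" using img B by blast
      have "enc d B (restrict i B) = enc d B (restrict i' B)"
        using fun_cong[OF eq, of n] n unfolding mp_def by auto
      then show ?thesis using bij_betw_imp_inj_on[OF encB[OF B]]
          restrict_tidx[OF i subP(1)[OF B]] restrict_tidx[OF i' subP(1)[OF B]]
        by (auto dest: inj_onD)
    qed
    show "i = i'"
    proof (rule PiE_ext[of i I "\<lambda>j. {..<d j}" i'])
      show "i \<in> PiE I (\<lambda>j. {..<d j})" "i' \<in> PiE I (\<lambda>j. {..<d j})" using i i' unfolding tidx_def by auto
      fix x assume "x \<in> I"
      then obtain B where B: "B \<in> P" "x \<in> B" using part_cover[OF p] unfolding I_def by blast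
      show "i x = i' x" using fun_cong[OF r[OF B(1)], of x] B(2) by simp
    qed
  qed
  have mp_bij: "bij_betw mp (tidx I d) (tidx {1..l} e)"
  proof -
    have "card (tidx {1..l} e) = (\<Prod>n\<in>{1..l}. e n)" unfolding tidx_def by (simp add: card_PiE)
    also have "\<dots> = (\<Prod>n\<in>{1..l}. \<Prod>r\<in>Bn n. d r)" using e by simp
    also have "\<dots> = (\<Prod>B\<in>P. \<Prod>r\<in>B. d r)"
      using prod.reindex[OF inj, of "\<lambda>B. \<Prod>r\<in>B. d r"] img by simp
    also have "\<dots> = (\<Prod>r\<in>\<Union>P. d r)"
      using prod.Union_disjoint[of P d] subP(2) part_dis[OF p] by auto
    also have "\<dots> = card (tidx I d)"
      using partition_onD1[OF p] fin unfolding tidx_def I_def by (simp add: card_PiE)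
    finally have c: "card (tidx {1..l} e) = card (tidx I d)" .
    have "mp ` tidx I d = tidx {1..l} e"
    proof (rule card_subset_eq)
      show "finite (tidx {1..l} e)" by (simp add: tidx_finite)
      show "mp ` tidx I d \<subseteq> tidx {1..l} e" using mp_in by auto
      show "card (mp ` tidx I d) = card (tidx {1..l} e)" using card_image[OF mp_inj] c by simp
    qed
    then show ?thesis using mp_inj unfolding bij_betw_def by simp
  qed
  have unf: "unfold k d P A (mp i) = A i" if i: "i \<in> tidx I d" for i
  proof -
    have "(THE i'. i' \<in> tidx {1..k} d \<and> (\<forall>j\<in>{1..length (blocks P)}.
        enc d (blocks P ! (j - 1)) (restrict i' (blocks P ! (j - 1))) = mp i j)) = i"
    proof (rule the_equality)
      show "i \<in> tidx {1..k} d \<and> (\<forall>j\<in>{1..length (blocks P)}.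
        enc d (blocks P ! (j - 1)) (restrict i (blocks P ! (j - 1))) = mp i j)"
        using i unfolding I_def mp_def Bn_def bs_def l_def by auto
      fix i' assume h: "i' \<in> tidx {1..k} d \<and> (\<forall>j\<in>{1..length (blocks P)}.
        enc d (blocks P ! (j - 1)) (restrict i' (blocks P ! (j - 1))) = mp i j)"
      then have "mp i' = mp i" unfolding mp_def Bn_def bs_def l_def fun_eq_iff by auto
      then show "i' = i" using mp_inj i h unfolding I_def by (auto dest: inj_onD)
    qed
    then show ?thesis unfolding unfold_def by simp
  qed
  have link: "(\<Sum>mm\<in>tidx {1..l} e. unfold k d P A mm * (\<Prod>n\<in>{1..l}. x n (mm n))) = val I d P A y
      \<and> ((\<forall>n\<in>{1..l}. sqrt (\<Sum>j<e n. (x n j)^2) = 1) \<longleftrightarrow> (\<forall>B\<in>P. nrm d B (y B) = 1))"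
    if L: "\<forall>n\<in>{1..l}. \<forall>v\<in>tidx (Bn n) d. x n (enc d (Bn n) v) = y (Bn n) v" for x y
  proof
    have "(\<Sum>mm\<in>tidx {1..l} e. unfold k d P A mm * (\<Prod>n\<in>{1..l}. x n (mm n)))
        = (\<Sum>i\<in>tidx I d. unfold k d P A (mp i) * (\<Prod>n\<in>{1..l}. x n (mp i n)))"
      using sum.reindex_bij_betw[OF mp_bij, of "\<lambda>mm. unfold k d P A mm * (\<Prod>n\<in>{1..l}. x n (mm n))"] by simp
    also have "\<dots> = val I d P A y" unfolding val_def
    proof (intro sum.cong refl)
      fix i assume i: "i \<in> tidx I d"
      have "(\<Prod>n\<in>{1..l}. x n (mp i n)) = (\<Prod>n\<in>{1..l}. y (Bn n) (restrict i (Bn n)))"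
      proof (intro prod.cong refl)
        fix n assume n: "n \<in> {1..l}"
        show "x n (mp i n) = y (Bn n) (restrict i (Bn n))"
          using L n restrict_tidx[OF i subP(1)[OF Bn_in[OF n]]] unfolding mp_def by auto
      qed
      also have "\<dots> = (\<Prod>B\<in>P. y B (restrict i B))"
        using prod.reindex[OF inj, of "\<lambda>B. y B (restrict i B)"] img by simp
      finally show "unfold k d P A (mp i) * (\<Prod>n\<in>{1..l}. x n (mp i n)) = A i * (\<Prod>B\<in>P. y B (restrict i B))"
        using unf[OF i] by simp
    qed
    finally show "(\<Sum>mm\<in>tidx {1..l} e. unfold k d P A mm * (\<Prod>n\<in>{1..l}. x n (mm n))) = val I d P A y" .
    have nm: "(\<Sum>j<e n. (x n j)^2) = nrm d (Bn n) (y (Bn n))" if n: "n \<in> {1..l}" for n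
    proof -
      have "nrm d (Bn n) (y (Bn n)) = (\<Sum>v\<in>tidx (Bn n) d. (x n (enc d (Bn n) v))^2)"
        unfolding nrm_def using L n by (intro sum.cong) auto
      also have "\<dots> = (\<Sum>j<e n. (x n j)^2)"
        using sum.reindex_bij_betw[OF encB[OF Bn_in[OF n]], of "\<lambda>j. (x n j)^2"] e[of n] by simp
      finally show ?thesis by simp
    qed
    show "(\<forall>n\<in>{1..l}. sqrt (\<Sum>j<e n. (x n j)^2) = 1) \<longleftrightarrow> (\<forall>B\<in>P. nrm d B (y B) = 1)"
      using nm img by auto
  qed
  have sets: "{(\<Sum>mm\<in>tidx {1..l} e. unfold k d P A mm * (\<Prod>n\<in>{1..l}. x n (mm n))) | x.
       \<forall>n\<in>{1..l}. sqrt (\<Sum>j<e n. (x n j)^2) = 1} = {val I d P A y | y. \<forall>B\<in>P. nrm d B (y B) = 1}"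
  proof (intro equalityI subsetI)
    fix z assume "z \<in> {(\<Sum>mm\<in>tidx {1..l} e. unfold k d P A mm * (\<Prod>n\<in>{1..l}. x n (mm n))) | x.
       \<forall>n\<in>{1..l}. sqrt (\<Sum>j<e n. (x n j)^2) = 1}"
    then obtain x where x: "\<forall>n\<in>{1..l}. sqrt (\<Sum>j<e n. (x n j)^2) = 1"
      and z: "z = (\<Sum>mm\<in>tidx {1..l} e. unfold k d P A mm * (\<Prod>n\<in>{1..l}. x n (mm n)))" by auto
    define y where "y B v = x (the_inv_into {1..l} Bn B) (enc d B v)" for B v
    have L: "\<forall>n\<in>{1..l}. \<forall>v\<in>tidx (Bn n) d. x n (enc d (Bn n) v) = y (Bn n) v"
      unfolding y_def using the_inv_into_f_f[OF inj] by simp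
    show "z \<in> {val I d P A y | y. \<forall>B\<in>P. nrm d B (y B) = 1}"
      using link[OF L] x z by auto
  next
    fix z assume "z \<in> {val I d P A y | y. \<forall>B\<in>P. nrm d B (y B) = 1}"
    then obtain y where y: "\<forall>B\<in>P. nrm d B (y B) = 1" and z: "z = val I d P A y" by auto
    define x where "x n j = y (Bn n) (the_inv_into (tidx (Bn n) d) (enc d (Bn n)) j)" for n j
    have L: "\<forall>n\<in>{1..l}. \<forall>v\<in>tidx (Bn n) d. x n (enc d (Bn n) v) = y (Bn n) v"
      unfolding x_def using the_inv_into_f_f[OF bij_betw_imp_inj_on[OF encB[OF Bn_in]]] by simp
    show "z \<in> {(\<Sum>mm\<in>tidx {1..l} e. unfold k d P A mm * (\<Prod>n\<in>{1..l}. x n (mm n))) | x.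
       \<forall>n\<in>{1..l}. sqrt (\<Sum>j<e n. (x n j)^2) = 1}"
    proof -
      have "z = (\<Sum>mm\<in>tidx {1..l} e. unfold k d P A mm * (\<Prod>n\<in>{1..l}. x n (mm n)))
          \<and> (\<forall>n\<in>{1..l}. sqrt (\<Sum>j<e n. (x n j)^2) = 1)"
        using link[OF L] y z by simp
      then show ?thesis by blast
    qed
  qed
  show ?thesis
    unfolding unfold_norm_def spec_norm_def NN_def
    using sets unfolding e_def l_def bs_def I_def by simp
qed


theorem theorem4p8:
  fixes k :: nat and d :: "nat \<Rightarrow> nat" and A :: "(nat \<Rightarrow> nat) \<Rightarrow> real"
    and P1 P2 :: "nat set set"
  assumes "\<forall>n\<in>{1..k}. d n > 0"
    and "partition_on {1..k} P1" and "partition_on {1..k} P2"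
  shows "(real (\<Prod>n\<in>{1..k}. d n) / real (dimA d P1 P2)) powr (-1/2) * unfold_norm k d P1 A
           \<le> unfold_norm k d P2 A
       \<and> unfold_norm k d P2 A
           \<le> (real (\<Prod>n\<in>{1..k}. d n) / real (dimA d P2 P1)) powr (1/2) * unfold_norm k d P1 A"
proof -
  note dpos = assms(1) and p1 = assms(2) and p2 = assms(3)
  have u1: "unfold_norm k d P1 A = NN {1..k} d P1 A" by (rule unfold_eq[OF dpos p1])
  have u2: "unfold_norm k d P2 A = NN {1..k} d P2 A" by (rule unfold_eq[OF dpos p2])
  show ?thesis
  proof (cases "k = 0")
    case True
    then have "P1 = {}" "P2 = {}" using p1 p2 partition_on_empty by auto
    then show ?thesis using True u1 u2 by (simp add: dimA_def)
  next
    case False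
    have fin: "finite {1..k}" and ne: "{1..k} \<noteq> {}" using False by auto
    define q1 where "q1 = real (\<Prod>n\<in>{1..k}. d n) / real (dimA d P1 P2)"
    define q2 where "q2 = real (\<Prod>n\<in>{1..k}. d n) / real (dimA d P2 P1)"
    have dimpos: "real (\<Prod>n\<in>{1..k}. d n) > 0" using dpos by (simp add: of_nat_prod prod_pos del: of_nat_prod[symmetric]) (rule prod_pos, auto)
    have q1pos: "q1 > 0" unfolding q1_def using dim_rel(2)[OF fin dpos p2 p1] dimpos by simp
    have q2pos: "q2 > 0" unfolding q2_def using dim_rel(2)[OF fin dpos p1 p2] dimpos by simp
    have m1: "NN {1..k} d P1 A \<le> sqrt q1 * NN {1..k} d P2 A"
      unfolding q1_def by (rule main_ineq[OF fin ne dpos p2 p1])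
    have m2: "NN {1..k} d P2 A \<le> sqrt q2 * NN {1..k} d P1 A"
      unfolding q2_def by (rule main_ineq[OF fin ne dpos p1 p2])
    have e1: "q1 powr (-1/2) = inverse (sqrt q1)"
    proof -
      have "q1 powr (-1/2) = q1 powr (- (1/2))" by simp
      also have "\<dots> = inverse (q1 powr (1/2))" by (rule powr_minus)
      also have "\<dots> = inverse (sqrt q1)" using q1pos by (simp add: powr_half_sqrt)
      finally show ?thesis .
    qed
    have e2: "q2 powr (1/2) = sqrt q2" using q2pos by (simp add: powr_half_sqrt)
    have s1: "sqrt q1 > 0" using q1pos by simp
    have "inverse (sqrt q1) * NN {1..k} d P1 A \<le> NN {1..k} d P2 A"
      using m1 s1 by (simp add: field_simps)
    then show ?thesis using m2 e1 e2 u1 u2 unfolding q1_def q2_def by simp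
  qed
qed


end
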